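(* Suppose the payoff $\tilde v$ follows $N(\mu_v,\sigma_v^2)$ with $\sigma_v>0$ and the informed trader observes a signal $\tilde s=\tilde v+\tilde\epsilon$, where $\tilde\epsilon\sim N(0,\sigma_\epsilon^2)$ is independent of $\tilde v$ and $\sigma_\epsilon^2$ is chosen by the trader. Let $\lambda,\sigma_Z,T>0$. Let $\xi:=\sigma_v^2/(\sigma_v^2+\sigma_\epsilon^2)\in[0,1]$ and let $\xi^*$ be the unique maximizer over $\xi\in[0,1]$ of $$\sigma_v\sigma_Z\sqrt T\sqrt\xi-\frac\lambda2\log\Big(\frac1{1-\xi}\Big).$$ Then the optimal conditional precision of the signal (maximizing the trader's value $J$ defined in the context) is $$\frac1{\sigma_\epsilon^2}=\frac1{\sigma_v^2}\,\frac{\xi^*}{1-\xi^*},$$ and both this optimal precision and $\xi^*$ decrease with $\frac{\lambda}{\sigma_v\sigma_Z\sqrt T}$.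
   Context: The informed trader's value of a signal is $J=\frac12\{\mathbb E[\mathbb E[\tilde v|\tilde s]^2]+\sigma_Z^2T-W_2^2(F_s,G)\}-\lambda I(\tilde s;\tilde v)$, where $F_s$ is the distribution of $\mathbb E[\tilde v|\tilde s]$, $G$ is the CDF of $N(0,\sigma_Z^2T)$, $W_2$ is the Wasserstein-2 distance, $I(\tilde s;\tilde v)$ is the mutual information and $\lambda>0$ the marginal cost of information. For the signal $\tilde s=\tilde v+\tilde\epsilon$, $J$ equals the function of $\xi$ displayed in the claim. *)

theory Defs
  imports Complex_Main
begin

text \<open>Signal informativeness xi = sv^2/(sv^2 + se^2), written in terms of the
  conditional precision p = 1/se^2 (p = 0 is the uninformative signal, se^2 = infinity).\<close>
definition xi_of :: "real \<Rightarrow> real \<Rightarrow> real" where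
  "xi_of sv p = sv\<^sup>2 * p / (sv\<^sup>2 * p + 1)"

definition value_xi :: "real \<Rightarrow> real \<Rightarrow> real \<Rightarrow> real \<Rightarrow> real \<Rightarrow> real" where
  "value_xi sv sZ T lam xi = sv * sZ * sqrt T * sqrt xi - lam / 2 * ln (1 / (1 - xi))"

definition J_prec :: "real \<Rightarrow> real \<Rightarrow> real \<Rightarrow> real \<Rightarrow> real \<Rightarrow> real" where
  "J_prec sv sZ T lam p = value_xi sv sZ T lam (xi_of sv p)"

text \<open>xi^*: the unique maximizer of the objective over xi in [0,1)
  (at xi = 1 the objective is -infinity, so it is excluded).\<close>
definition opt_xi :: "real \<Rightarrow> real \<Rightarrow> real \<Rightarrow> real \<Rightarrow> real" where
  "opt_xi sv sZ T lam = (THE xi. xi \<in> {0..<1} \<and>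
      (\<forall>eta\<in>{0..<1}. value_xi sv sZ T lam eta \<le> value_xi sv sZ T lam xi))"

definition opt_prec :: "real \<Rightarrow> real \<Rightarrow> real \<Rightarrow> real \<Rightarrow> real" where
  "opt_prec sv sZ T lam = 1 / sv\<^sup>2 * (opt_xi sv sZ T lam / (1 - opt_xi sv sZ T lam))"

definition kappa :: "real \<Rightarrow> real \<Rightarrow> real \<Rightarrow> real \<Rightarrow> real" where
  "kappa sv sZ T lam = lam / (sv * sZ * sqrt T)"

end

theory Submission
  imports Defs
begin

lemma ln_strict: "0 < (t::real) \<Longrightarrow> t \<noteq> 1 \<Longrightarrow> ln t < t - 1"
  using ln_le_minus_one[of t] ln_eq_minus_one[of t] by force

definition xs :: "real \<Rightarrow> real" where
  "xs k = 2 / (k + sqrt (k\<^sup>2 + 4))"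

lemma xs_props:
  assumes "k > 0"
  shows "0 < xs k" "xs k < 1" "k * xs k = 1 - (xs k)\<^sup>2"
proof -
  let ?s = "sqrt (k\<^sup>2 + 4)"
  have s2: "?s\<^sup>2 = k\<^sup>2 + 4" by simp
  have sgt: "?s > 2"
    by (metis assms real_less_rsqrt add.commute less_add_same_cancel2 power2_eq_square zero_less_power2 less_irrefl real_sqrt_four real_sqrt_less_iff numeral_Bit0 numeral_One order_less_imp_not_less)
  have pos: "k + ?s > 0" using assms sgt by linarith
  show "0 < xs k" unfolding xs_def using pos by simp
  show "xs k < 1" unfolding xs_def using pos sgt assms by simp
  have e: "xs k = (?s - k) / 2"
    unfolding xs_def using pos s2 by (simp add: field_simps power2_eq_square)
  show "k * xs k = 1 - (xs k)\<^sup>2"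
    unfolding e using s2 by (simp add: field_simps power2_eq_square)
qed

lemma value_sq:
  assumes "0 \<le> y" "y < 1"
  shows "value_xi sv sZ T lam (y\<^sup>2) = sv * sZ * sqrt T * y + lam / 2 * (ln (1 - y) + ln (1 + y))"
proof -
  have "1 - y\<^sup>2 = (1 - y) * (1 + y)" by (simp add: power2_eq_square algebra_simps)
  then have "ln (1 / (1 - y\<^sup>2)) = - (ln (1 - y) + ln (1 + y))"
    using assms by (simp add: ln_div ln_mult)
  then have "lam / 2 * ln (1 / (1 - y\<^sup>2)) = - (lam / 2 * (ln (1 - y) + ln (1 + y)))" by (simp only:)
  moreover have "sqrt (y\<^sup>2) = y" using assms by simp
  ultimately show ?thesis unfolding value_xi_def by (simp only:)
qed

lemma key:
  fixes a lam y :: real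
  assumes a: "a > 0" and l: "lam > 0" and y: "0 \<le> y" "y < 1" and ne: "y \<noteq> xs (lam / a)"
  shows "a * y + lam / 2 * (ln (1 - y) + ln (1 + y))
       < a * xs (lam / a) + lam / 2 * (ln (1 - xs (lam / a)) + ln (1 + xs (lam / a)))"
proof -
  define x where "x = xs (lam / a)"
  have k: "lam / a > 0" using a l by simp
  have x0: "0 < x" "x < 1" and xe: "lam / a * x = 1 - x\<^sup>2" using xs_props[OF k] x_def by auto
  have L1: "ln ((1 - y) / (1 - x)) < (1 - y) / (1 - x) - 1"
    apply (rule ln_strict) using x0 y ne x_def by (auto simp: field_simps)
  have L2: "ln ((1 + y) / (1 + x)) < (1 + y) / (1 + x) - 1"
    apply (rule ln_strict) using x0 y ne x_def by (auto simp: field_simps)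
  have e1: "ln ((1 - y) / (1 - x)) = ln (1 - y) - ln (1 - x)" using x0 y by (simp add: ln_div)
  have e2: "ln ((1 + y) / (1 + x)) = ln (1 + y) - ln (1 + x)" using x0 y by (simp add: ln_div)
  have S: "(ln (1 - y) + ln (1 + y)) - (ln (1 - x) + ln (1 + x)) < (x - y) * (2 * x / (1 - x\<^sup>2))"
  proof -
    have "(1 - y) / (1 - x) - 1 + ((1 + y) / (1 + x) - 1) = (x - y) * (2 * x / (1 - x\<^sup>2))"
      using x0 by (simp add: field_simps power2_eq_square)
    then show ?thesis using L1 L2 e1 e2 by linarith
  qed
  have lx: "lam * x / (1 - x\<^sup>2) = a"
  proof -
    have "1 - x\<^sup>2 = lam * x / a" using xe by simp
    moreover have "x\<^sup>2 < 1" using x0 by (simp add: power_less_one_iff abs_less_iff)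
    ultimately show ?thesis using a l x0 by (simp add: field_simps)
  qed
  have "lam / 2 * ((ln (1 - y) + ln (1 + y)) - (ln (1 - x) + ln (1 + x)))
      < lam / 2 * ((x - y) * (2 * x / (1 - x\<^sup>2)))"
    using mult_strict_left_mono[OF S, of "lam/2"] l by simp
  also have "\<dots> = (x - y) * (lam * x / (1 - x\<^sup>2))"
  proof -
    have "x\<^sup>2 < 1" using x0 by (simp add: power_less_one_iff abs_less_iff)
    then show ?thesis by (simp add: field_simps)
  qed
  also have "\<dots> = a * (x - y)" using lx by simp
  finally show ?thesis unfolding x_def[symmetric] by (simp add: algebra_simps)
qed

lemma xs_mono:
  assumes "0 < k" "k < k'"
  shows "xs k' < xs k"
proof -
  have s: "sqrt (k\<^sup>2 + 4) < sqrt (k'\<^sup>2 + 4)"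
    using assms by (simp add: power_strict_mono)
  have p1: "0 < k + sqrt (k\<^sup>2 + 4)" using assms by (simp add: add_pos_nonneg)
  have p2: "0 < k' + sqrt (k'\<^sup>2 + 4)" using assms by (simp add: add_pos_nonneg)
  have lt: "k + sqrt (k\<^sup>2 + 4) < k' + sqrt (k'\<^sup>2 + 4)" using s assms by linarith
  show ?thesis unfolding xs_def
    by (rule divide_strict_left_mono[OF lt]) (use p1 p2 in auto)
qed

lemma opt_char:
  fixes sv sZ T lam :: real
  assumes "sv > 0" "sZ > 0" "T > 0" "lam > 0"
  defines "x0 \<equiv> (xs (kappa sv sZ T lam))\<^sup>2"
  shows "x0 \<in> {0..<1}"
    "\<And>eta. eta \<in> {0..<1} \<Longrightarrow> eta \<noteq> x0 \<Longrightarrow> value_xi sv sZ T lam eta < value_xi sv sZ T lam x0"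
    "opt_xi sv sZ T lam = x0"
proof -
  define a where "a = sv * sZ * sqrt T"
  have a: "a > 0" unfolding a_def using assms by simp
  have kk: "kappa sv sZ T lam = lam / a" unfolding kappa_def a_def by simp
  have k: "lam / a > 0" using a assms by simp
  note xp = xs_props[OF k]
  show x0: "x0 \<in> {0..<1}" unfolding x0_def kk using xp
    by (simp add: power_less_one_iff abs_less_iff)
  have V: "value_xi sv sZ T lam x0 = a * xs (lam / a) + lam / 2 * (ln (1 - xs (lam / a)) + ln (1 + xs (lam / a)))"
    unfolding x0_def kk a_def by (rule value_sq) (use xp in \<open>auto simp: a_def\<close>)
  show strict: "value_xi sv sZ T lam eta < value_xi sv sZ T lam x0" if "eta \<in> {0..<1}" "eta \<noteq> x0" for eta
  proof -
    define y where "y = sqrt eta"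
    have ey: "eta = y\<^sup>2" unfolding y_def using that by simp
    have y: "0 \<le> y" "y < 1" unfolding y_def using that by auto
    have ne: "y \<noteq> xs (lam / a)" using that(2) ey unfolding x0_def kk by auto
    have "value_xi sv sZ T lam eta = a * y + lam / 2 * (ln (1 - y) + ln (1 + y))"
      unfolding ey a_def using value_sq y by simp
    then show ?thesis using key[OF a assms(4) y ne] V by simp
  qed
  have "(THE xi. xi \<in> {0..<1} \<and>
      (\<forall>eta\<in>{0..<1}. value_xi sv sZ T lam eta \<le> value_xi sv sZ T lam xi)) = x0"
  proof (rule the_equality)
    show "x0 \<in> {0..<1} \<and> (\<forall>eta\<in>{0..<1}. value_xi sv sZ T lam eta \<le> value_xi sv sZ T lam x0)"
      using x0 strict by (metis order_le_less order_refl)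
  next
    fix xi assume h: "xi \<in> {0..<1} \<and> (\<forall>eta\<in>{0..<1}. value_xi sv sZ T lam eta \<le> value_xi sv sZ T lam xi)"
    then show "xi = x0" using strict[of xi] x0 by fastforce
  qed
  then show "opt_xi sv sZ T lam = x0" unfolding opt_xi_def .
qed

lemma xi_of_range: "sv > 0 \<Longrightarrow> 0 \<le> p \<Longrightarrow> xi_of sv p \<in> {0..<1}"
proof -
  assume "sv > 0" "0 \<le> p"
  then have "0 \<le> sv\<^sup>2 * p" by simp
  then show ?thesis unfolding xi_of_def by (auto simp: field_simps)
qed

lemma xi_of_inv:
  assumes "sv > 0" "x \<in> {0..<1}" "0 \<le> p"
  shows "xi_of sv p = x \<longleftrightarrow> p = 1 / sv\<^sup>2 * (x / (1 - x))" (is "?L \<longleftrightarrow> ?R")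
proof
  assume ?R
  then have e: "sv\<^sup>2 * p = x / (1 - x)" using assms by simp
  have "1 - x > 0" using assms by simp
  then show ?L unfolding xi_of_def e by (simp add: field_simps)
next
  assume ?L
  have d: "sv\<^sup>2 * p + 1 \<noteq> 0" using assms(3) by (smt (verit) zero_le_power2 mult_nonneg_nonneg)
  then have "sv\<^sup>2 * p = x * (sv\<^sup>2 * p + 1)" using \<open>?L\<close> unfolding xi_of_def by (simp add: divide_eq_eq)
  then have "sv\<^sup>2 * p * (1 - x) = x"
    by (metis (no_types, lifting) add_diff_cancel_left' mult.commute mult.right_neutral right_diff_distrib distrib_left)
  then show ?R using assms by (auto simp: field_simps)
qed

theorem proposition3:
  fixes sv sZ T lam :: real
  assumes "sv > 0" "sZ > 0" "T > 0" "lam > 0"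
  shows "(\<exists>!xi. xi \<in> {0..<1} \<and>
            (\<forall>eta\<in>{0..<1}. value_xi sv sZ T lam eta \<le> value_xi sv sZ T lam xi))
    \<and> {p. 0 \<le> p \<and> (\<forall>q. 0 \<le> q \<longrightarrow> J_prec sv sZ T lam q \<le> J_prec sv sZ T lam p)}
        = {opt_prec sv sZ T lam}
    \<and> (\<forall>sv' sZ' T' lam'. sv' > 0 \<longrightarrow> sZ' > 0 \<longrightarrow> T' > 0 \<longrightarrow> lam' > 0 \<longrightarrow>
         kappa sv sZ T lam < kappa sv' sZ' T' lam' \<longrightarrow>
           opt_xi sv' sZ' T' lam' < opt_xi sv sZ T lam
           \<and> (sv' = sv \<longrightarrow> opt_prec sv' sZ' T' lam' < opt_prec sv sZ T lam))"
proof (intro conjI allI impI)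
  define x0 where "x0 = (xs (kappa sv sZ T lam))\<^sup>2"
  note oc = opt_char[OF assms, folded x0_def]
  show "\<exists>!xi. xi \<in> {0..<1} \<and>
            (\<forall>eta\<in>{0..<1}. value_xi sv sZ T lam eta \<le> value_xi sv sZ T lam xi)"
  proof (rule ex1I[of _ x0])
    show "x0 \<in> {0..<1} \<and> (\<forall>eta\<in>{0..<1}. value_xi sv sZ T lam eta \<le> value_xi sv sZ T lam x0)"
      using oc(1,2) by (metis order_le_less order_refl)
  next
    fix xi assume h: "xi \<in> {0..<1} \<and> (\<forall>eta\<in>{0..<1}. value_xi sv sZ T lam eta \<le> value_xi sv sZ T lam xi)"
    then show "xi = x0" using oc(2)[of xi] oc(1) by fastforce
  qed
  have op: "opt_prec sv sZ T lam = 1 / sv\<^sup>2 * (x0 / (1 - x0))"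
    unfolding opt_prec_def oc(3) ..
  have opn: "0 \<le> opt_prec sv sZ T lam" using op oc(1) by simp
  have xo: "xi_of sv (opt_prec sv sZ T lam) = x0"
    using xi_of_inv[OF assms(1) oc(1) opn] op by simp
  have Jle: "J_prec sv sZ T lam q \<le> value_xi sv sZ T lam x0" if "0 \<le> q" for q
    unfolding J_prec_def using oc(2)[OF xi_of_range[OF assms(1) that]] by (cases "xi_of sv q = x0") auto
  show "{p. 0 \<le> p \<and> (\<forall>q. 0 \<le> q \<longrightarrow> J_prec sv sZ T lam q \<le> J_prec sv sZ T lam p)}
        = {opt_prec sv sZ T lam}"
  proof (intro set_eqI iffI)
    fix p assume "p \<in> {p. 0 \<le> p \<and> (\<forall>q. 0 \<le> q \<longrightarrow> J_prec sv sZ T lam q \<le> J_prec sv sZ T lam p)}"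
    then have p: "0 \<le> p" "J_prec sv sZ T lam (opt_prec sv sZ T lam) \<le> J_prec sv sZ T lam p"
      using opn by auto
    then have "value_xi sv sZ T lam x0 \<le> value_xi sv sZ T lam (xi_of sv p)"
      unfolding J_prec_def xo by simp
    then have "xi_of sv p = x0" using oc(2)[OF xi_of_range[OF assms(1) p(1)]] by force
    then show "p \<in> {opt_prec sv sZ T lam}" using xi_of_inv[OF assms(1) oc(1) p(1)] op by simp
  next
    fix p assume "p \<in> {opt_prec sv sZ T lam}"
    then show "p \<in> {p. 0 \<le> p \<and> (\<forall>q. 0 \<le> q \<longrightarrow> J_prec sv sZ T lam q \<le> J_prec sv sZ T lam p)}"
      using opn Jle unfolding J_prec_def xo by (auto simp: J_prec_def xo)
  qed
  fix sv' sZ' T' lam' :: real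
  assume a': "sv' > 0" "sZ' > 0" "T' > 0" "lam' > 0" and kl: "kappa sv sZ T lam < kappa sv' sZ' T' lam'"
  define x1 where "x1 = (xs (kappa sv' sZ' T' lam'))\<^sup>2"
  note oc' = opt_char[OF a', folded x1_def]
  have kp: "kappa sv sZ T lam > 0" unfolding kappa_def using assms by simp
  have xlt: "xs (kappa sv' sZ' T' lam') < xs (kappa sv sZ T lam)" by (rule xs_mono[OF kp kl])
  have "0 < xs (kappa sv' sZ' T' lam')" using xs_props kp kl by simp
  then have lt: "x1 < x0" unfolding x0_def x1_def using xlt by (simp add: power_strict_mono)
  then show "opt_xi sv' sZ' T' lam' < opt_xi sv sZ T lam" using oc(3) oc'(3) by simp
  assume "sv' = sv"
  have r: "x1 / (1 - x1) < x0 / (1 - x0)" 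
  proof -
    have "1 - x1 > 0" "1 - x0 > 0" using oc(1) oc'(1) by auto
    moreover have "x1 * (1 - x0) < x0 * (1 - x1)" using lt by (simp add: algebra_simps)
    ultimately show ?thesis by (simp add: field_simps)
  qed
  have "opt_prec sv' sZ' T' lam' = 1 / sv\<^sup>2 * (x1 / (1 - x1))"
    using oc'(3) \<open>sv' = sv\<close> unfolding opt_prec_def by simp
  moreover have "1 / sv\<^sup>2 * (x1 / (1 - x1)) < 1 / sv\<^sup>2 * (x0 / (1 - x0))"
    by (rule mult_strict_left_mono[OF r]) (use assms(1) in simp)
  ultimately show "opt_prec sv' sZ' T' lam' < opt_prec sv sZ T lam" using op by simp
qed

end
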